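(* Let $(S,\mu^{(5)})$ be a commutative $5$-ary semigroup. Define on $S\times S$ the ternary operation $\boldsymbol\mu'^{(3)}\big[(a_1,b_1),(a_2,b_2),(a_3,b_3)\big]=\big(\mu^{(5)}[a_1,b_2,a_3,b_1,a_2],\ b_3\big)$. Then $\boldsymbol\mu'^{(3)}$ is totally associative, so $(S\times S,\boldsymbol\mu'^{(3)})$ is a ternary semigroup. If $e\in S$ satisfies $\mu^{(5)}[e,e,e,e,a]=a$ for all $a\in S$, then $E=(e,e)$ satisfies $\boldsymbol\mu'^{(3)}[E,E,\mathbf S]=\mathbf S$ for all $\mathbf S\in S\times S$.
   Context: A $5$-ary semigroup is a set $S$ with a totally associative map $\mu^{(5)}:S^{\times5}\to S$ (composition of two multiplications on an ordered $9$-tuple is independent of the position of the inner one); commutative means invariant under all permutations of the five arguments. A ternary operation is totally associative if $\mu[\mu[g_1,g_2,g_3],g_4,g_5]=\mu[g_1,\mu[g_2,g_3,g_4],g_5]=\mu[g_1,g_2,\mu[g_3,g_4,g_5]]$. *)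

theory Defs
  imports Main "HOL-Combinatorics.Permutations"
begin

type_synonym 'a op5 = "'a \<Rightarrow> 'a \<Rightarrow> 'a \<Rightarrow> 'a \<Rightarrow> 'a \<Rightarrow> 'a"
type_synonym 'a op3 = "'a \<Rightarrow> 'a \<Rightarrow> 'a \<Rightarrow> 'a"

definition tot_assoc5 :: "'a op5 \<Rightarrow> bool" where
  "tot_assoc5 m \<longleftrightarrow> (\<forall>x1 x2 x3 x4 x5 x6 x7 x8 x9.
      m (m x1 x2 x3 x4 x5) x6 x7 x8 x9 = m x1 (m x2 x3 x4 x5 x6) x7 x8 x9
    \<and> m x1 (m x2 x3 x4 x5 x6) x7 x8 x9 = m x1 x2 (m x3 x4 x5 x6 x7) x8 x9
    \<and> m x1 x2 (m x3 x4 x5 x6 x7) x8 x9 = m x1 x2 x3 (m x4 x5 x6 x7 x8) x9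
    \<and> m x1 x2 x3 (m x4 x5 x6 x7 x8) x9 = m x1 x2 x3 x4 (m x5 x6 x7 x8 x9))"

definition comm5 :: "'a op5 \<Rightarrow> bool" where
  "comm5 m \<longleftrightarrow> (\<forall>(f :: nat \<Rightarrow> 'a) \<sigma>. \<sigma> permutes {0..<5} \<longrightarrow>
      m (f (\<sigma> 0)) (f (\<sigma> 1)) (f (\<sigma> 2)) (f (\<sigma> 3)) (f (\<sigma> 4)) = m (f 0) (f 1) (f 2) (f 3) (f 4))"

definition semigroup5 :: "'a op5 \<Rightarrow> bool" where
  "semigroup5 m \<longleftrightarrow> tot_assoc5 m"

definition comm_semigroup5 :: "'a op5 \<Rightarrow> bool" where
  "comm_semigroup5 m \<longleftrightarrow> semigroup5 m \<and> comm5 m"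

definition tot_assoc3 :: "'a op3 \<Rightarrow> bool" where
  "tot_assoc3 m \<longleftrightarrow> (\<forall>g1 g2 g3 g4 g5.
      m (m g1 g2 g3) g4 g5 = m g1 (m g2 g3 g4) g5
    \<and> m g1 (m g2 g3 g4) g5 = m g1 g2 (m g3 g4 g5))"

definition mu3' :: "'a op5 \<Rightarrow> ('a \<times> 'a) op3" where
  "mu3' m p1 p2 p3 = (m (fst p1) (snd p2) (fst p3) (snd p1) (fst p2), snd p3)"

end

theory Submission
  imports Defs
begin

lemma swp:
  fixes f :: "nat \<Rightarrow> _"
  assumes c: "comm5 m" and "i < (5::nat)" "j < 5"
  shows "m (f (Transposition.transpose i j 0)) (f (Transposition.transpose i j 1)) (f (Transposition.transpose i j 2))
           (f (Transposition.transpose i j 3)) (f (Transposition.transpose i j 4)) = m (f 0) (f 1) (f 2) (f 3) (f 4)"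
proof -
  have "Transposition.transpose i j permutes {0..<5}"
    using assms by (intro permutes_swap_id) auto
  thus ?thesis using c unfolding comm5_def by blast
qed

lemma c01: "comm5 m \<Longrightarrow> m x2 x1 x3 x4 x5 = m x1 x2 x3 x4 x5"
  using swp[of m 0 1 "\<lambda>i. [x1,x2,x3,x4,x5]!i"] by (simp add: transpose_def)
lemma c12: "comm5 m \<Longrightarrow> m x1 x3 x2 x4 x5 = m x1 x2 x3 x4 x5"
  using swp[of m 1 2 "\<lambda>i. [x1,x2,x3,x4,x5]!i"] by (simp add: transpose_def)
lemma c23: "comm5 m \<Longrightarrow> m x1 x2 x4 x3 x5 = m x1 x2 x3 x4 x5"
  using swp[of m 2 3 "\<lambda>i. [x1,x2,x3,x4,x5]!i"] by (simp add: transpose_def)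
lemma c34: "comm5 m \<Longrightarrow> m x1 x2 x3 x5 x4 = m x1 x2 x3 x4 x5"
  using swp[of m 3 4 "\<lambda>i. [x1,x2,x3,x4,x5]!i"] by (simp add: transpose_def)
lemma c04: "comm5 m \<Longrightarrow> m x5 x2 x3 x4 x1 = m x1 x2 x3 x4 x5"
  using swp[of m 0 4 "\<lambda>i. [x1,x2,x3,x4,x5]!i"] by (simp add: transpose_def)

lemma a1: "tot_assoc5 m \<Longrightarrow> m x1 (m x2 x3 x4 x5 x6) x7 x8 x9 = m (m x1 x2 x3 x4 x5) x6 x7 x8 x9"
  unfolding tot_assoc5_def by metis
lemma a2: "tot_assoc5 m \<Longrightarrow> m x1 x2 (m x3 x4 x5 x6 x7) x8 x9 = m (m x1 x2 x3 x4 x5) x6 x7 x8 x9"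
  unfolding tot_assoc5_def by metis
lemma a3: "tot_assoc5 m \<Longrightarrow> m x1 x2 x3 (m x4 x5 x6 x7 x8) x9 = m (m x1 x2 x3 x4 x5) x6 x7 x8 x9"
  unfolding tot_assoc5_def by metis
lemma a4: "tot_assoc5 m \<Longrightarrow> m x1 x2 x3 x4 (m x5 x6 x7 x8 x9) = m (m x1 x2 x3 x4 x5) x6 x7 x8 x9"
  unfolding tot_assoc5_def by metis

lemma c56: "comm5 m \<Longrightarrow> tot_assoc5 m \<Longrightarrow>
   m (m x1 x2 x3 x4 x6) x5 x7 x8 x9 = m (m x1 x2 x3 x4 x5) x6 x7 x8 x9"
proof -
  assume c: "comm5 m" and a: "tot_assoc5 m"
  have "m (m x1 x2 x3 x4 x6) x5 x7 x8 x9 = m x1 x2 x3 x4 (m x6 x5 x7 x8 x9)" using a4[OF a] by simp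
  also have "\<dots> = m x1 x2 x3 x4 (m x5 x6 x7 x8 x9)" using c01[OF c] by simp
  also have "\<dots> = m (m x1 x2 x3 x4 x5) x6 x7 x8 x9" using a4[OF a] by simp
  finally show ?thesis .
qed

theorem mainTheorem6:
  fixes m :: "'a op5"
  assumes "comm_semigroup5 m"
  shows "tot_assoc3 (mu3' m)
    \<and> (\<forall>e. (\<forall>a. m e e e e a = a) \<longrightarrow> (\<forall>s. mu3' m (e, e) (e, e) s = s))"
proof -
  have c: "comm5 m" and a: "tot_assoc5 m" using assms
    by (auto simp: comm_semigroup5_def semigroup5_def)
  note R = a1[OF a] a2[OF a] a3[OF a] a4[OF a] c01[OF c] c12[OF c] c23[OF c] c34[OF c] c56[OF c a]
  note C = c01[OF c] c12[OF c] c23[OF c] c34[OF c]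
  note S = c56[OF c a]
  have g1: "m (m a1 b2 a3 b1 a2) b4 a5 b3 a4 = m (m a1 b4 a5 b1 a2) b3 a4 b2 a3" for a1 a2 a3 a4 a5 b1 b2 b3 b4
  proof -
    have "m (m a1 b2 a3 b1 a2) b4 a5 b3 a4 = m (m a1 b1 a2 b2 a3) b4 a5 b3 a4" by (simp only: C)
    also have "\<dots> = m (m a1 b1 a2 b2 b4) a3 a5 b3 a4" by (rule S[symmetric])
    also have "\<dots> = m (m a1 b1 a2 b4 b2) a5 a3 b3 a4" by (simp only: C)
    also have "\<dots> = m (m a1 b1 a2 b4 a5) b2 a3 b3 a4" by (rule S[symmetric])
    also have "\<dots> = m (m a1 b4 a5 b1 a2) b3 a4 b2 a3" by (simp only: C)
    finally show ?thesis .
  qed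
  have g2: "m (m a1 b2 a3 b1 a2) b4 a5 b3 a4 = m (m a1 b2 a3 b4 a5) b3 a4 b1 a2" for a1 a2 a3 a4 a5 b1 b2 b3 b4
  proof -
    have "m (m a1 b2 a3 b1 a2) b4 a5 b3 a4 = m (m a1 b2 a3 b1 b4) a2 a5 b3 a4" by (rule S[symmetric])
    also have "\<dots> = m (m a1 b2 a3 b4 b1) a5 a2 b3 a4" by (simp only: C)
    also have "\<dots> = m (m a1 b2 a3 b4 a5) b1 a2 b3 a4" by (rule S[symmetric])
    also have "\<dots> = m (m a1 b2 a3 b4 a5) b3 a4 b1 a2" by (simp only: C)
    finally show ?thesis .
  qed
  have "tot_assoc3 (mu3' m)"
    unfolding tot_assoc3_def proof (intro allI conjI)
    fix g1 g2 g3 g4 g5 :: "'a \<times> 'a"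
    show "mu3' m (mu3' m g1 g2 g3) g4 g5 = mu3' m g1 (mu3' m g2 g3 g4) g5"
      unfolding mu3'_def prod.sel by (simp only: a4[OF a]) (subst g1, rule refl)
    show "mu3' m g1 (mu3' m g2 g3 g4) g5 = mu3' m g1 g2 (mu3' m g3 g4 g5)"
      unfolding mu3'_def prod.sel by (simp only: a4[OF a] a2[OF a]) (subst g1[symmetric], subst g2, rule refl)
  qed
  moreover have "\<forall>e. (\<forall>a. m e e e e a = a) \<longrightarrow> (\<forall>s. mu3' m (e, e) (e, e) s = s)"
  proof (intro allI impI)
    fix e and s :: "'a \<times> 'a" assume h: "\<forall>a. m e e e e a = a"
    have "m e e (fst s) e e = m e e e e (fst s)" using c23[OF c] c34[OF c] by metis
    thus "mu3' m (e, e) (e, e) s = s" using h by (simp add: mu3'_def)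
  qed
  ultimately show ?thesis by blast
qed

end
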